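(* Let ${\mathbf{x}}^* \in \mathbb{R}^n$, ${\mathbf{x}}^*\ge 0$, $\mathcal{J} = \mathrm{supp}({\mathbf{x}}^* )$, and $s \in [\|{\mathbf{x}}^*\|_\infty, \infty]$. Let $\mathcal{J}' \supseteq \mathcal{J}$ be an index set for which there exists a vector ${\mathbf{c}}$ with $$\frac{P {\mathbf{e}}_j}{\| P {\mathbf{e}}_j \|_2} \cdot {\mathbf{c}} = 1 \ \ \forall j \in \mathcal{J}', \qquad \frac{P {\mathbf{e}}_i}{\| P {\mathbf{e}}_i \|_2} \cdot {\mathbf{c}} < 1 \ \ \forall i \in (\mathcal{J}')^c. \qquad (\dagger)$$ Then every solution ${\mathbf{y}}$ of $$\min_{0 \leq {\mathbf{x}} \leq s} \| W {\mathbf{x}} \|_1 \quad \text{subject to} \quad A {\mathbf{x}} = A {\mathbf{x}}^*$$ satisfies $\mathrm{supp}({\mathbf{y}}) \subseteq \mathcal{J}'$. Consequently, every such solution satisfies $\mathrm{supp}({\mathbf{y}}) \subseteq \overline{\mathcal{J}}$, where $\overline{\mathcal{J}} = \bigcap\{\mathcal{J}' : \mathcal{J}' \supseteq \mathcal{J} \text{ and there exists } {\mathbf{c}} \text{ such that } (\dagger) \text{ holds for } \mathcal{J}'\}$, assumed nonempty.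
   Context: $A \in \mathbb{R}^{m\times n}$ is a matrix, $A^\dagger$ its Moore–Penrose pseudoinverse, and $P = A^\dagger A$ the orthogonal projection onto $\mathcal{N}(A)^\perp$. ${\mathbf{e}}_1,\dots,{\mathbf{e}}_n$ are the standard unit vectors, assumed not to lie in $\mathcal{N}(A)$, so $w_i := \|P{\mathbf{e}}_i\|_2 > 0$; $W = \mathrm{diag}(w_1,\dots,w_n)$. Inequalities are componentwise; $s=\infty$ means only ${\mathbf{x}}\ge 0$. *)

theory Defs
  imports "HOL-Analysis.Analysis"
begin

definition is_pinv :: "real^'n^'m \<Rightarrow> real^'m^'n \<Rightarrow> bool" where
  "is_pinv A B \<longleftrightarrow> A ** B ** A = A \<and> B ** A ** B = B \<and>
     transpose (A ** B) = A ** B \<and> transpose (B ** A) = B ** A"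

definition pinv :: "real^'n^'m \<Rightarrow> real^'m^'n" where
  "pinv A = (THE B. is_pinv A B)"

definition projP :: "real^'n^'m \<Rightarrow> real^'n^'n" where
  "projP A = pinv A ** A"

definition supp :: "real^'n \<Rightarrow> 'n set" where
  "supp x = {i. x $ i \<noteq> 0}"

definition wts :: "real^'n^'m \<Rightarrow> 'n \<Rightarrow> real" where
  "wts A i = norm (projP A *v axis i 1)"

definition wl1 :: "real^'n^'m \<Rightarrow> real^'n \<Rightarrow> real" where
  "wl1 A x = (\<Sum>i\<in>UNIV. \<bar>wts A i * x $ i\<bar>)"

text \<open>feasible set: 0 \<le> x \<le> s, A x = A x*  (s = \<infinity> means only x \<ge> 0)\<close>
definition feasible :: "real^'n^'m \<Rightarrow> ereal \<Rightarrow> real^'n \<Rightarrow> real^'n \<Rightarrow> bool" where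
  "feasible A s xs x \<longleftrightarrow> (\<forall>i. 0 \<le> x $ i \<and> ereal (x $ i) \<le> s) \<and> A *v x = A *v xs"

definition is_solution :: "real^'n^'m \<Rightarrow> ereal \<Rightarrow> real^'n \<Rightarrow> real^'n \<Rightarrow> bool" where
  "is_solution A s xs y \<longleftrightarrow> feasible A s xs y \<and> (\<forall>x. feasible A s xs x \<longrightarrow> wl1 A y \<le> wl1 A x)"

definition dagger :: "real^'n^'m \<Rightarrow> 'n set \<Rightarrow> bool" where
  "dagger A J' \<longleftrightarrow> (\<exists>c::real^'n.
     (\<forall>j\<in>J'. ((projP A *v axis j 1) /\<^sub>R norm (projP A *v axis j 1)) \<bullet> c = 1) \<and>
     (\<forall>i\<in>- J'. ((projP A *v axis i 1) /\<^sub>R norm (projP A *v axis i 1)) \<bullet> c < 1))"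

end

theory Submission imports Defs begin

lemma sym_mat:
  fixes M :: "real^'n^'n"
  assumes "\<And>x z. (M *v x) \<bullet> z = x \<bullet> (M *v z)"
  shows "transpose M = M"
proof -
  have "\<And>x z. x \<bullet> (transpose M *v z) = x \<bullet> (M *v z)"
  proof -
    fix x z
    have "x \<bullet> (transpose M *v z) = (z v* M) \<bullet> x"
      by (simp add: inner_commute)
    also have "\<dots> = z \<bullet> (M *v x)" by (rule dot_lmul_matrix)
    also have "\<dots> = x \<bullet> (M *v z)" using assms by (simp add: inner_commute)
    finally show "x \<bullet> (transpose M *v z) = x \<bullet> (M *v z)" .
  qed
  then have "\<And>z. transpose M *v z = M *v z"
    by (metis inner_diff_right vector_eq_ldot)
  then show ?thesis by (simp add: matrix_eq)
qed

lemma tr_orth: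
  fixes A :: "real^'n^'m"
  assumes "A *v n = 0"
  shows "(transpose A *v z) \<bullet> n = 0"
  using dot_lmul_matrix[of z A n] assms by simp

lemma pinv_exists:
  fixes A :: "real^'n^'m"
  shows "\<exists>B. is_pinv A B"
proof -
  define V where "V = range (\<lambda>z. transpose A *v z)"
  define R where "R = range (\<lambda>x. A *v x)"
  have subV: "subspace V" unfolding V_def
    by (rule linear_subspace_image[OF matrix_vector_mul_linear subspace_UNIV])
  have subR: "subspace R" unfolding R_def
    by (rule linear_subspace_image[OF matrix_vector_mul_linear subspace_UNIV])
  have spV: "span V = V" using subV span_eq_iff by blast
  have nullV: "v \<bullet> n = 0" if "v \<in> V" "A *v n = 0" for v n
    using that tr_orth unfolding V_def by blast
  have decomp: "\<exists>v\<in>V. A *v (x - v) = 0" for x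
  proof -
    obtain v n where v: "v \<in> span V" and o: "\<And>w. w \<in> span V \<Longrightarrow> orthogonal n w" and x: "x = v + n"
      using orthogonal_subspace_decomp_exists by blast
    have "transpose A *v (A *v n) \<in> V" unfolding V_def by blast
    then have "n \<bullet> (transpose A *v (A *v n)) = 0" using o spV by (simp add: orthogonal_def)
    then have "(A *v n) \<bullet> (A *v n) = 0"
      using dot_lmul_matrix[of "A *v n" A n] by (simp add: inner_commute)
    then have "A *v n = 0" by simp
    then show ?thesis using v spV x by (intro bexI[of _ v]) auto
  qed
  have inj: "inj_on (\<lambda>x. A *v x) (span V)"
  proof (rule inj_onI)
    fix a b assume a: "a \<in> span V" and b: "b \<in> span V" and e: "A *v a = A *v b"
    have "a - b \<in> V" using a b spV subV by (simp add: subspace_diff)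
    moreover have "A *v (a - b) = 0" using e by (simp add: matrix_vector_mult_diff_distrib)
    ultimately have "(a - b) \<bullet> (a - b) = 0" using nullV by blast
    then show "a = b" by simp
  qed
  obtain g where rg: "range g \<subseteq> span V" and lg: "linear g" and gf: "\<forall>x\<in>span V. g (A *v x) = x"
    using linear_inj_on_left_inverse[OF matrix_vector_mul_linear inj] by blast
  have rgV: "g y \<in> V" for y using rg spV by blast
  have gfV: "g (A *v x) = x" if "x \<in> V" for x using gf spV that by blast
  define ok where "ok y p \<longleftrightarrow> p \<in> R \<and> (\<forall>w\<in>R. (y - p) \<bullet> w = 0)" for y p
  have ok_ex: "\<exists>p. ok y p" for y
  proof -
    obtain p n where p: "p \<in> span R" and o: "\<And>w. w \<in> span R \<Longrightarrow> orthogonal n w" and x: "y = p + n"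
      using orthogonal_subspace_decomp_exists by blast
    have spR: "span R = R" using subR span_eq_iff by blast
    show ?thesis unfolding ok_def using p o x spR by (intro exI[of _ p]) (auto simp: orthogonal_def)
  qed
  have ok_un: "p = q" if "ok y p" "ok y q" for y p q
  proof -
    have "p - q \<in> R" using that subR unfolding ok_def by (simp add: subspace_diff)
    then have "(y - q) \<bullet> (p - q) - (y - p) \<bullet> (p - q) = 0" using that unfolding ok_def by simp
    then have "(p - q) \<bullet> (p - q) = 0" by (simp add: inner_diff_left)
    then show ?thesis by simp
  qed
  define p where "p y = (SOME q. ok y q)" for y
  have okp: "ok y (p y)" for y unfolding p_def using ok_ex someI_ex by metis
  have pR: "p y \<in> R" for y using okp ok_def by blast
  have porth: "(y - p y) \<bullet> w = 0" if "w \<in> R" for y w using okp ok_def that by blast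
  have lp: "linear p"
  proof (rule linearI)
    fix a b
    have "ok (a + b) (p a + p b)" unfolding ok_def
    proof
      show "p a + p b \<in> R" using pR subR by (simp add: subspace_add)
      have e: "a + b - (p a + p b) = (a - p a) + (b - p b)" by simp
      show "\<forall>w\<in>R. (a + b - (p a + p b)) \<bullet> w = 0"
        unfolding e inner_add_left using porth by simp
    qed
    then show "p (a + b) = p a + p b" using ok_un okp by blast
  next
    fix c x
    have "ok (c *\<^sub>R x) (c *\<^sub>R p x)" unfolding ok_def
    proof
      show "c *\<^sub>R p x \<in> R" using pR subR by (simp add: subspace_scale)
      show "\<forall>w\<in>R. (c *\<^sub>R x - c *\<^sub>R p x) \<bullet> w = 0"
        using porth by (metis inner_scaleR_left mult_zero_right scaleR_right_diff_distrib)
    qed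
    then show "p (c *\<^sub>R x) = c *\<^sub>R p x" using ok_un okp by blast
  qed
  define h where "h = g \<circ> p"
  have lh: "linear h" unfolding h_def using lp lg linear_compose by blast
  define B where "B = matrix h"
  have Bv: "B *v y = h y" for y unfolding B_def using lh by simp
  have pA: "p (A *v x) = A *v x" for x
  proof -
    have "ok (A *v x) (A *v x)" unfolding ok_def R_def by auto
    then show ?thesis using ok_un okp by blast
  qed
  have Ah: "A *v h y = p y" for y
  proof -
    obtain x where x: "p y = A *v x" using pR unfolding R_def by blast
    obtain v where v: "v \<in> V" "A *v (x - v) = 0" using decomp by blast
    have "A *v x = A *v v" using v(2) by (simp add: matrix_vector_mult_diff_distrib)
    then show ?thesis using x gfV[OF v(1)] unfolding h_def by simp
  qed
  have hV: "h y \<in> V" for y unfolding h_def using rgV by simp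
  have hA_null: "A *v (x - h (A *v x)) = 0" for x
    using Ah pA by (simp add: matrix_vector_mult_diff_distrib)
  have c1: "A ** B ** A = A"
    by (simp add: matrix_eq Bv Ah pA flip: matrix_vector_mul_assoc)
  have c2: "B ** A ** B = B"
  proof -
    have "h (A *v h y) = h y" for y
    proof -
      have "h (A *v h y) = g (p (A *v h y))" unfolding h_def by simp
      also have "\<dots> = g (A *v h y)" by (simp only: pA)
      also have "\<dots> = h y" using gfV[OF hV[of y]] .
      finally show ?thesis .
    qed
    then show ?thesis by (simp add: matrix_eq Bv flip: matrix_vector_mul_assoc)
  qed
  have c3: "transpose (A ** B) = A ** B"
  proof (rule sym_mat)
    fix x z
    have e: "p y \<bullet> z = p y \<bullet> p z" for y z
    proof -
      have "(z - p z) \<bullet> p y = 0" using porth[OF pR[of y], of z] .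
      then have "z \<bullet> p y = p z \<bullet> p y" by (simp add: inner_diff_left)
      then show ?thesis by (simp add: inner_commute)
    qed
    have "((A ** B) *v x) \<bullet> z = p x \<bullet> z" by (simp add: Bv Ah flip: matrix_vector_mul_assoc)
    also have "\<dots> = p x \<bullet> p z" by (rule e)
    also have "\<dots> = p z \<bullet> x" using e[of z x] by (simp add: inner_commute)
    also have "\<dots> = x \<bullet> ((A ** B) *v z)" by (simp add: Bv Ah inner_commute flip: matrix_vector_mul_assoc)
    finally show "((A ** B) *v x) \<bullet> z = x \<bullet> ((A ** B) *v z)" .
  qed
  have c4: "transpose (B ** A) = B ** A"
  proof (rule sym_mat)
    fix x z
    have e: "h (A *v x) \<bullet> z = h (A *v x) \<bullet> h (A *v z)" for x z
    proof -
      have "h (A *v x) \<bullet> (z - h (A *v z)) = 0" using nullV[OF hV hA_null[of z]] .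
      then show ?thesis by (simp add: inner_diff_right)
    qed
    have "((B ** A) *v x) \<bullet> z = h (A *v x) \<bullet> z" by (simp add: Bv flip: matrix_vector_mul_assoc)
    also have "\<dots> = h (A *v x) \<bullet> h (A *v z)" by (rule e)
    also have "\<dots> = h (A *v z) \<bullet> x" using e[of z x] by (simp add: inner_commute)
    also have "\<dots> = x \<bullet> ((B ** A) *v z)" by (simp add: Bv inner_commute flip: matrix_vector_mul_assoc)
    finally show "((B ** A) *v x) \<bullet> z = x \<bullet> ((B ** A) *v z)" .
  qed
  show ?thesis using c1 c2 c3 c4 unfolding is_pinv_def by blast
qed

lemma pinv_unique:
  fixes A :: "real^'n^'m"
  assumes hB: "is_pinv A B" and hC: "is_pinv A C"
  shows "B = C"
proof -
  have b1: "A ** B ** A = A" and b2: "B ** A ** B = B" and b3: "transpose (A ** B) = A ** B"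
    and b4: "transpose (B ** A) = B ** A" using hB unfolding is_pinv_def by auto
  have c1: "A ** C ** A = A" and c2: "C ** A ** C = C" and c3: "transpose (A ** C) = A ** C"
    and c4: "transpose (C ** A) = C ** A" using hC unfolding is_pinv_def by auto
  have h1: "A ** B = transpose B ** transpose A" using b3 by (simp add: matrix_transpose_mul)
  have h2: "transpose A = transpose A ** transpose C ** transpose A"
    using arg_cong[OF c1, of transpose] by (simp add: matrix_transpose_mul matrix_mul_assoc)
  have h3: "transpose C ** transpose A = A ** C" using c3 by (simp add: matrix_transpose_mul)
  have "B = B ** (A ** B)" using b2 by (simp add: matrix_mul_assoc)
  also have "\<dots> = B ** transpose B ** transpose A" using h1 by (simp add: matrix_mul_assoc)
  also have "\<dots> = B ** transpose B ** transpose A ** (transpose C ** transpose A)"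
    using h2 by (metis matrix_mul_assoc)
  also have "\<dots> = B ** (A ** B) ** (A ** C)" using h1 h3 by (metis matrix_mul_assoc)
  also have "\<dots> = B ** A ** C" using b2 by (metis matrix_mul_assoc)
  finally have eB: "B = B ** A ** C" .
  have g1: "C ** A = transpose A ** transpose C" using c4 by (simp add: matrix_transpose_mul)
  have g3: "transpose A ** transpose B = B ** A" using b4 by (simp add: matrix_transpose_mul)
  have h2': "transpose A = transpose A ** transpose B ** transpose A"
    using arg_cong[OF b1, of transpose] by (simp add: matrix_transpose_mul matrix_mul_assoc)
  have "C = (C ** A) ** C" using c2 by (simp add: matrix_mul_assoc)
  also have "\<dots> = transpose A ** transpose C ** C" using g1 by simp
  also have "\<dots> = (transpose A ** transpose B) ** (transpose A ** transpose C) ** C"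
    using h2' by (metis matrix_mul_assoc)
  also have "\<dots> = (B ** A) ** (C ** A) ** C" using g1 g3 by simp
  also have "\<dots> = B ** A ** C" using c2 by (metis matrix_mul_assoc)
  finally show ?thesis using eB by simp
qed

lemma pinv_is: "is_pinv A (pinv A)"
  unfolding pinv_def by (rule theI') (use pinv_exists pinv_unique in blast)


lemma main:
  fixes A :: "real^'n^'m" and xs :: "real^'n" and s :: ereal and K :: "'n set" and y :: "real^'n"
  assumes notnull: "\<forall>i. A *v axis i 1 \<noteq> 0"
    and xs_nonneg: "\<forall>i. 0 \<le> xs $ i"
    and s_ge: "ereal (Max (range (\<lambda>i. \<bar>xs $ i\<bar>))) \<le> s"
    and K_sup: "supp xs \<subseteq> K"
    and K_dag: "dagger A K"
    and sol: "is_solution A s xs y"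
  shows "supp y \<subseteq> K"
proof -
  define P where "P = projP A"
  define w where "w i = norm (P *v axis i 1)" for i
  have wts: "wts A i = w i" for i unfolding wts_def w_def P_def by simp
  have APe: "A *v (P *v x) = A *v x" for x
  proof -
    have "A ** pinv A ** A = A" using pinv_is[of A] unfolding is_pinv_def by auto
    then show ?thesis unfolding P_def projP_def by (simp add: matrix_vector_mul_assoc matrix_mul_assoc)
  qed
  have wpos: "w i > 0" for i
  proof -
    have "P *v axis i 1 \<noteq> 0" using APe[of "axis i 1"] notnull by auto
    then show ?thesis unfolding w_def by simp
  qed
  obtain c where cK: "\<forall>j\<in>K. ((P *v axis j 1) /\<^sub>R w j) \<bullet> c = 1"
    and cN: "\<forall>i\<in>- K. ((P *v axis i 1) /\<^sub>R w i) \<bullet> c < 1"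
    using K_dag unfolding dagger_def P_def w_def by blast
  define d where "d i = ((P *v axis i 1) /\<^sub>R w i) \<bullet> c" for i
  have Pd: "(P *v axis i 1) \<bullet> c = w i * d i" for i
    unfolding d_def using wpos[of i] by simp
  have lin: "(P *v x) \<bullet> c = (\<Sum>i\<in>UNIV. x $ i * (w i * d i))" for x
  proof -
    have "x = (\<Sum>i\<in>UNIV. x $ i *\<^sub>R axis i 1)"
      using basis_expansion[of x] by (simp add: scalar_mult_eq_scaleR)
    then have "P *v x = P *v (\<Sum>i\<in>UNIV. x $ i *\<^sub>R axis i 1)" by simp
    also have "\<dots> = (\<Sum>i\<in>UNIV. x $ i *\<^sub>R (P *v axis i 1))"
      by (simp add: linear_sum[OF matrix_vector_mul_linear] o_def matrix_vector_mult_scaleR)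
    finally show ?thesis by (simp add: inner_sum_left Pd)
  qed
  have y_feas: "feasible A s xs y" and y_min: "\<And>x. feasible A s xs x \<Longrightarrow> wl1 A y \<le> wl1 A x"
    using sol unfolding is_solution_def by auto
  have y_nn: "0 \<le> y $ i" for i using y_feas unfolding feasible_def by auto
  have Ay: "A *v y = A *v xs" using y_feas unfolding feasible_def by auto
  have xs_feas: "feasible A s xs xs"
    unfolding feasible_def
  proof (intro conjI allI)
    fix i
    show "0 \<le> xs $ i" using xs_nonneg by auto
    have "xs $ i \<le> Max (range (\<lambda>i. \<bar>xs $ i\<bar>))"
      by (rule order_trans[OF abs_ge_self Max_ge]) auto
    then have "ereal (xs $ i) \<le> ereal (Max (range (\<lambda>i. \<bar>xs $ i\<bar>)))" by simp
    then show "ereal (xs $ i) \<le> s" using s_ge by (rule order_trans)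
  qed simp
  have wl1_nn: "wl1 A x = (\<Sum>i\<in>UNIV. w i * x $ i)" if "\<forall>i. 0 \<le> x $ i" for x
    unfolding wl1_def wts using that wpos by (intro sum.cong refl) (simp add: abs_mult less_imp_le)
  have Pyx: "P *v y = P *v xs"
    unfolding P_def projP_def by (simp flip: matrix_vector_mul_assoc add: Ay)
  have xs_sum: "(\<Sum>i\<in>UNIV. xs $ i * (w i * d i)) = (\<Sum>i\<in>UNIV. w i * xs $ i)"
  proof (intro sum.cong refl)
    fix i
    show "xs $ i * (w i * d i) = w i * xs $ i"
    proof (cases "xs $ i = 0")
      case False
      then have "i \<in> K" using K_sup unfolding supp_def by auto
      then have "d i = 1" using cK unfolding d_def by auto
      then show ?thesis by simp
    qed simp
  qed
  have "(\<Sum>i\<in>UNIV. y $ i * (w i * d i)) = wl1 A xs"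
    using lin[of y] lin[of xs] Pyx xs_sum wl1_nn[of xs] xs_nonneg by simp
  moreover have "wl1 A y \<le> wl1 A xs" using y_min xs_feas by blast
  ultimately have le: "(\<Sum>i\<in>UNIV. w i * y $ i) \<le> (\<Sum>i\<in>UNIV. y $ i * (w i * d i))"
    using wl1_nn[of y] y_nn by simp
  have dle: "d i \<le> 1" for i
    using cK cN unfolding d_def by (cases "i \<in> K") (auto simp: less_imp_le)
  have tnn: "0 \<le> w i * y $ i - y $ i * (w i * d i)" for i
  proof -
    have "y $ i * (w i * d i) \<le> y $ i * (w i * 1)"
      using y_nn[of i] wpos[of i] dle[of i] by (intro mult_left_mono) auto
    then show ?thesis by (simp add: mult.commute)
  qed
  have "(\<Sum>i\<in>UNIV. w i * y $ i - y $ i * (w i * d i)) \<le> 0"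
    using le by (simp add: sum_subtractf)
  moreover have "0 \<le> (\<Sum>i\<in>UNIV. w i * y $ i - y $ i * (w i * d i))"
    using tnn by (simp add: sum_nonneg)
  ultimately have "(\<Sum>i\<in>UNIV. w i * y $ i - y $ i * (w i * d i)) = 0" by simp
  then have z: "w i * y $ i - y $ i * (w i * d i) = 0" for i
    using sum_nonneg_eq_0_iff[of UNIV "\<lambda>i. w i * y $ i - y $ i * (w i * d i)"] tnn by auto
  show ?thesis
  proof
    fix i assume "i \<in> supp y"
    then have yi: "y $ i \<noteq> 0" unfolding supp_def by auto
    show "i \<in> K"
    proof (rule ccontr)
      assume "i \<notin> K"
      then have "d i < 1" using cN unfolding d_def by auto
      moreover have "y $ i * w i * (1 - d i) = 0" proof -
        have "y $ i * w i * (1 - d i) = w i * y $ i - y $ i * (w i * d i)" by (simp add: ring_distribs mult_ac)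
        then show ?thesis using z[of i] by simp
      qed
      ultimately show False using yi wpos[of i] by simp
    qed
  qed
qed

theorem proposition1:
  fixes A :: "real^'n^'m" and xs :: "real^'n" and s :: ereal and J' :: "'n set" and y :: "real^'n"
  assumes notnull: "\<forall>i. A *v axis i 1 \<noteq> 0"
    and xs_nonneg: "\<forall>i. 0 \<le> xs $ i"
    and s_ge: "ereal (Max (range (\<lambda>i. \<bar>xs $ i\<bar>))) \<le> s"
    and J'_sup: "supp xs \<subseteq> J'"
    and J'_dag: "dagger A J'"
    and sol: "is_solution A s xs y"
  shows "supp y \<subseteq> J' \<and> supp y \<subseteq> \<Inter>{K. supp xs \<subseteq> K \<and> dagger A K}"
  using main[OF notnull xs_nonneg s_ge _ _ sol] J'_sup J'_dag by blast

end
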